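(* Let $x_1,\dots,x_4,y_1,\dots,y_4\in\{-1,+1\}$ with $(x_k,y_k)\neq(-1,-1)$ for all $k\in\{1,2,3,4\}$. Then $$x_1x_4+x_2x_3+y_1y_2+y_3y_4-x_1y_1-x_2y_2-x_3y_3-x_4y_4\ge 0.$$ *)

theory Defs
  imports Main
begin

end

theory Submission
  imports Defs
begin

theorem lemma16:
  fixes x1 x2 x3 x4 y1 y2 y3 y4 :: int
  assumes "x1 \<in> {-1, 1}" "x2 \<in> {-1, 1}" "x3 \<in> {-1, 1}" "x4 \<in> {-1, 1}"
    and "y1 \<in> {-1, 1}" "y2 \<in> {-1, 1}" "y3 \<in> {-1, 1}" "y4 \<in> {-1, 1}"
    and "(x1, y1) \<noteq> (-1, -1)" "(x2, y2) \<noteq> (-1, -1)"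
    and "(x3, y3) \<noteq> (-1, -1)" "(x4, y4) \<noteq> (-1, -1)"
  shows "x1*x4 + x2*x3 + y1*y2 + y3*y4 - x1*y1 - x2*y2 - x3*y3 - x4*y4 \<ge> 0"
  using assms by auto

end
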